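(* Let $b\ge 2$ and $n\ge 0$ be integers. Then $$g(T_b(n)) = \frac{(b^{3}+b^{2}-b-1)\,b^{2n} + \{(n-1)(b^{2}-1)-2\}\,b^{n} - 2b + 4}{2}.$$
   Context: For integers $b\ge 2$, $n\ge 0$ and $i\ge 0$ put $s_i=(b+1)b^{n+i}-1$, and let $T_b(n)=\langle\{s_i : i\in\mathbb{N}\}\rangle$ be the submonoid of $(\mathbb{N},+)$ generated by these numbers (a numerical semigroup). For a numerical semigroup $S$, the genus $g(S)$ is the cardinality of $\mathbb{N}\setminus S$. *)

theory Defs
  imports Complex_Main
begin

inductive_set submonoid_gen :: "nat set \<Rightarrow> nat set" for A :: "nat set" where
  zero: "0 \<in> submonoid_gen A"
| add: "a \<in> A \<Longrightarrow> x \<in> submonoid_gen A \<Longrightarrow> a + x \<in> submonoid_gen A"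

definition s_gen :: "nat \<Rightarrow> nat \<Rightarrow> nat \<Rightarrow> nat" where
  "s_gen b n i = (b + 1) * b ^ (n + i) - 1"

definition T :: "nat \<Rightarrow> nat \<Rightarrow> nat set" where
  "T b n = submonoid_gen (range (s_gen b n))"

definition genus :: "nat set \<Rightarrow> nat" where
  "genus S = card (UNIV - S)"

end

theory Submission imports Defs begin

function hh :: "nat \<Rightarrow> nat \<Rightarrow> nat" where
  "hh b N = (if b < 2 \<or> N = 0 then 0 else N div b + hh b (N div b))"
  by auto
termination by (relation "measure snd") auto

declare hh.simps[simp del]

lemma hh_rec: "b \<ge> 2 \<Longrightarrow> hh b N = N div b + hh b (N div b)"
  by (cases "N = 0") (simp_all add: hh.simps[of b N] hh.simps[of b 0])

lemma hh_zero: "hh b 0 = 0" by (simp add: hh.simps)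

lemma hh_mono: assumes "b \<ge> 2" shows "N \<le> N' \<Longrightarrow> hh b N \<le> hh b N'"
proof (induction N' arbitrary: N rule: less_induct)
  case (less N')
  show ?case
  proof (cases "N' = 0")
    case True then show ?thesis using less by (simp add: hh_zero)
  next
    case False
    then have "N' div b < N'" using assms by simp
    moreover have "N div b \<le> N' div b" using less.prems by (simp add: div_le_mono)
    ultimately have "hh b (N div b) \<le> hh b (N' div b)" using less.IH by blast
    then show ?thesis using hh_rec[OF assms, of N] hh_rec[OF assms, of N'] \<open>N div b \<le> N' div b\<close> by linarith
  qed
qed

lemma hh_mult: "b \<ge> 2 \<Longrightarrow> hh b (b*Q) = Q + hh b Q"
  using hh_rec[of b "b*Q"] by simp

definition rr :: "nat \<Rightarrow> nat \<Rightarrow> nat" where "rr b i = (\<Sum>l<i. b^l)"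

lemma rr_0[simp]: "rr b 0 = 0" by (simp add: rr_def)
lemma rr_Suc: "rr b (Suc i) = rr b i + b^i" by (simp add: rr_def)
lemma rr_Suc': "rr b (Suc i) = b * rr b i + 1"
proof (induction i)
  case 0 then show ?case by (simp add: rr_def)
next
  case (Suc i)
  have "rr b (Suc (Suc i)) = rr b (Suc i) + b^Suc i" by (rule rr_Suc)
  also have "\<dots> = b * (rr b i + b^i) + 1" using Suc by (simp add: algebra_simps)
  finally show ?case by (simp add: rr_Suc)
qed

lemma hh_add_pow: assumes "b \<ge> 2" shows "hh b N + rr b i \<le> hh b (N + b^i)"
proof (induction i arbitrary: N)
  case 0 then show ?case using hh_mono[OF assms, of N "N+1"] by simp
next
  case (Suc i)
  have d: "(N + b^Suc i) div b = N div b + b^i" using assms by simp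
  have "hh b (N + b^Suc i) = N div b + b^i + hh b (N div b + b^i)"
    using hh_rec[OF assms, of "N + b^Suc i"] d by simp
  moreover have "hh b (N div b) + rr b i \<le> hh b (N div b + b^i)" using Suc.IH .
  moreover have "hh b N = N div b + hh b (N div b)" using hh_rec[OF assms] .
  ultimately show ?case by (simp add: rr_Suc)
qed

lemma geom_int: "int (b - 1) * int (rr b i) = int b ^ i - 1" if "b \<ge> 1"
  using that by (induction i) (auto simp: rr_Suc algebra_simps of_nat_diff)

lemma s_eq: assumes "b \<ge> 2"
  shows "s_gen b n i = ((b+1)*b^n - 1) * b^i + (b-1) * rr b i"
proof -
  have p: "(b+1)*b^n \<ge> 1" "(b+1)*b^(n+i) \<ge> 1" using assms by (simp_all add: Suc_le_eq)
  have e1: "int (s_gen b n i) = (int b+1)*int b^(n+i) - 1"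
    using p unfolding s_gen_def by (simp add: of_nat_diff algebra_simps)
  have e2: "int (((b+1)*b^n - 1) * b^i + (b-1) * rr b i) = ((int b+1)*int b^n - 1) * int b^i + (int b^i - 1)"
  proof -
    have a: "int ((b+1)*b^n - 1) = (int b+1)*int b^n - 1" using p by (simp add: of_nat_diff algebra_simps)
    have c: "int (b-1) * int (rr b i) = int b^i - 1" using geom_int[of b i] assms by simp
    show ?thesis by (simp only: of_nat_add of_nat_mult a c of_nat_power)
  qed
  have "int (s_gen b n i) = int (((b+1)*b^n - 1) * b^i + (b-1) * rr b i)"
    unfolding e1 e2 by (simp add: algebra_simps power_add)
  then show ?thesis by (simp only: of_nat_eq_iff)
qed

lemma T_add: "x \<in> T b n \<Longrightarrow> y \<in> T b n \<Longrightarrow> x + y \<in> T b n"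
  unfolding T_def
  by (induction x rule: submonoid_gen.induct) (auto simp: add.assoc intro: submonoid_gen.add)

lemma T_zero: "0 \<in> T b n" unfolding T_def by (rule submonoid_gen.zero)

lemma gen_in: "s_gen b n i \<in> T b n"
  unfolding T_def using submonoid_gen.add[OF rangeI submonoid_gen.zero] by simp

definition mm :: "nat \<Rightarrow> nat \<Rightarrow> nat" where "mm b n = (b+1)*b^n - 1"

lemma memb_imp: assumes "b \<ge> 2"
  shows "x \<in> T b n \<Longrightarrow> \<exists>N j. j \<le> hh b N \<and> x = mm b n * N + (b-1) * j"
  unfolding T_def
proof (induction x rule: submonoid_gen.induct)
  case zero then show ?case by auto
next
  case (add a x)
  then obtain i where a: "a = s_gen b n i" by auto
  from add obtain N j where Nj: "j \<le> hh b N" "x = mm b n * N + (b-1) * j" by auto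
  have "j + rr b i \<le> hh b (N + b^i)" using hh_add_pow[OF assms, of N i] Nj by linarith
  moreover have "a + x = mm b n * (N + b^i) + (b-1) * (j + rr b i)"
  proof -
    have a2: "a = mm b n * b^i + (b-1) * rr b i" using a s_eq[OF assms, of n i] by (simp add: mm_def)
    define M where "M = mm b n"
    define c where "c = b - 1"
    show ?thesis using a2 Nj(2) unfolding M_def[symmetric] c_def[symmetric] by (simp add: algebra_simps)
  qed
  ultimately show ?case by blast
qed

lemma multi_copy:
  assumes "\<forall>t\<le>R. mm b n * A + (b-1)*t \<in> T b n"
  shows "\<forall>t\<le>c*R. mm b n * (c*A) + (b-1)*t \<in> T b n"
proof (induction c)
  case 0 then show ?case by (simp add: T_zero)
next
  case (Suc c)
  show ?case
  proof (intro allI impI)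
    fix t assume t: "t \<le> Suc c * R"
    define t1 where "t1 = min t R"
    define t2 where "t2 = t - t1"
    have "t2 \<le> c*R" using t unfolding t1_def t2_def by auto
    then have i2: "mm b n * (c*A) + (b-1)*t2 \<in> T b n" using Suc by blast
    have i1: "mm b n * A + (b-1)*t1 \<in> T b n" using assms unfolding t1_def by simp
    have "mm b n * (Suc c*A) + (b-1)*t = (mm b n * A + (b-1)*t1) + (mm b n * (c*A) + (b-1)*t2)"
    proof -
      define M where "M = mm b n"
      define d where "d = b - 1"
      have "t = t1 + t2" unfolding t2_def t1_def by simp
      then show ?thesis unfolding M_def[symmetric] d_def[symmetric] by (simp add: algebra_simps)
    qed
    then show "mm b n * (Suc c*A) + (b-1)*t \<in> T b n" using T_add[OF i1 i2] by simp
  qed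
qed

lemma pow_rep: assumes "b \<ge> 2" shows "\<forall>t\<le>rr b i. mm b n * b^i + (b-1)*t \<in> T b n"
proof (induction i)
  case 0 then show ?case using gen_in[of b n 0] s_eq[OF assms, of n 0] by (simp add: mm_def)
next
  case (Suc i)
  show ?case
  proof (intro allI impI)
    fix t assume t: "t \<le> rr b (Suc i)"
    show "mm b n * b^Suc i + (b-1)*t \<in> T b n"
    proof (cases "t = rr b (Suc i)")
      case True then show ?thesis using gen_in[of b n "Suc i"] s_eq[OF assms, of n "Suc i"] by (simp add: mm_def)
    next
      case False
      then have "t \<le> b * rr b i" using t rr_Suc'[of b i] by simp
      then have "mm b n * (b * b^i) + (b-1)*t \<in> T b n" using multi_copy[OF Suc, of b] by blast
      then show ?thesis by simp
    qed
  qed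
qed

lemma factor_ex: fixes b N :: nat assumes "b \<ge> 2" shows "N > 0 \<Longrightarrow> \<exists>i u. N = b^i*u \<and> \<not> b dvd u"
proof (induction N rule: less_induct)
  case (less N)
  show ?case
  proof (cases "b dvd N")
    case False then show ?thesis by (rule_tac x=0 in exI) auto
  next
    case True
    then obtain N' where N': "N = b*N'" by auto
    then have "N' < N" "N' > 0" using less.prems assms by auto
    then obtain i u where "N' = b^i*u" "\<not> b dvd u" using less.IH by blast
    then show ?thesis using N' by (rule_tac x="Suc i" in exI) auto
  qed
qed

lemma hh_split: assumes "b \<ge> 2" "\<not> b dvd u"
  shows "hh b (b^i*u) = hh b (b^i*(u-1)) + rr b i"
proof (induction i)
  case 0
  have r: "u mod b \<noteq> 0" using assms(2) by (simp add: dvd_eq_mod_eq_0)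
  have e: "u = b*(u div b) + u mod b" by simp
  have lt: "u mod b < b" using assms(1) by simp
  have "(u-1) div b = u div b"
  proof (rule div_nat_eqI)
    show "b * (u div b) \<le> u - 1" using e r by linarith
    have "b * Suc (u div b) = b*(u div b) + b" by simp
    then show "u - 1 < b * Suc (u div b)" using e lt by linarith
  qed
  then show ?case using hh_rec[OF assms(1), of u] hh_rec[OF assms(1), of "u-1"] by simp
next
  case (Suc i)
  have u: "u \<ge> 1" using assms by (cases u) auto
  have "hh b (b^Suc i*u) = b^i*u + hh b (b^i*u)" using hh_mult[OF assms(1), of "b^i*u"] by (simp add: mult.assoc)
  moreover have "hh b (b^Suc i*(u-1)) = b^i*(u-1) + hh b (b^i*(u-1))" using hh_mult[OF assms(1), of "b^i*(u-1)"] by (simp add: mult.assoc)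
  moreover have "b^i*u = b^i*(u-1) + b^i" using u by (simp add: algebra_simps)
  ultimately show ?case using Suc by (simp add: rr_Suc)
qed

lemma rep_all: assumes "b \<ge> 2" shows "\<forall>j\<le>hh b N. mm b n * N + (b-1)*j \<in> T b n"
proof (induction N rule: less_induct)
  case (less N)
  show ?case
  proof (cases "N = 0")
    case True then show ?thesis by (simp add: hh_zero T_zero)
  next
    case False
    then obtain i u where iu: "N = b^i*u" "\<not> b dvd u" using factor_ex[OF assms] by blast
    have u: "u \<ge> 1" using iu by (cases u) auto
    define N' where "N' = b^i*(u-1)"
    have NN: "N = N' + b^i" using iu u unfolding N'_def by (simp add: algebra_simps)
    have "N' < N" using NN assms by simp
    have hN: "hh b N = hh b N' + rr b i" using hh_split[OF assms iu(2), of i] iu unfolding N'_def by simp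
    show ?thesis
    proof (intro allI impI)
      fix j assume j: "j \<le> hh b N"
      define j2 where "j2 = min j (rr b i)"
      define j1 where "j1 = j - j2"
      have "j1 \<le> hh b N'" using j hN unfolding j1_def j2_def by auto
      then have i1: "mm b n * N' + (b-1)*j1 \<in> T b n" using less.IH[OF \<open>N' < N\<close>] by blast
      have i2: "mm b n * b^i + (b-1)*j2 \<in> T b n" using pow_rep[OF assms] unfolding j2_def by simp
      have "mm b n * N + (b-1)*j = (mm b n * N' + (b-1)*j1) + (mm b n * b^i + (b-1)*j2)"
      proof -
        define M where "M = mm b n"
        define d where "d = b - 1"
        have "j = j1 + j2" unfolding j2_def j1_def by simp
        then show ?thesis unfolding NN M_def[symmetric] d_def[symmetric] by (simp add: algebra_simps)
      qed
      then show "mm b n * N + (b-1)*j \<in> T b n" using T_add[OF i1 i2] by simp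
    qed
  qed
qed

lemma memb: assumes "b \<ge> 2"
  shows "x \<in> T b n \<longleftrightarrow> (\<exists>N j. j \<le> hh b N \<and> x = mm b n * N + (b-1) * j)"
  using memb_imp[OF assms] rep_all[OF assms] by blast

lemma cancel: fixes c m x y :: nat assumes "coprime c m" "(c*x) mod m = (c*y) mod m" shows "x mod m = y mod m"
  by (metis (mono_tags, lifting) assms(1,2) coprime_commute coprime_int_iff
    mult_mod_cancel_left of_nat_eq_iff of_nat_mod of_nat_mult)

lemma cop: fixes a k :: nat shows "coprime a (a*k+1)"
  by (metis coprime_add_one_right coprime_mult_left_iff)

lemma divsum: fixes a m k :: nat assumes "0 < a mod m" "a \<le> k*m" shows "a div m + (k*m - a) div m = k - 1"
proof -
  define q where "q = a div m"
  define r where "r = a mod m"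
  have m: "m > 0" using assms by (cases m) auto
  have a: "a = q*m + r" unfolding q_def r_def by simp
  have r: "0 < r" "r < m" using assms m unfolding r_def by auto
  have "q*m < k*m" using a r assms(2) by linarith
  then have qk: "q < k" using m by simp
  have e: "k*m - a = (k - Suc q)*m + (m - r)"
  proof -
    obtain d where d: "k = Suc (q + d)" using qk less_imp_Suc_add by blast
    have "k*m = (k - Suc q)*m + m + q*m" unfolding d by (simp add: algebra_simps)
    then show ?thesis using a r by simp
  qed
  have z: "(m - r) div m = 0" using r by simp
  have "((m - r) + (k - Suc q)*m) div m = (k - Suc q) + (m - r) div m"
    using m by (intro div_mult_self1) simp
  then have "(k*m - a) div m = k - Suc q" unfolding e z by (metis add.commute add_0_right)
  then show ?thesis unfolding q_def[symmetric] using qk by simp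
qed

lemma m_eq: assumes "b \<ge> 2" shows "mm b n = (b-1)*((b+1)*rr b n + 1) + 1"
proof -
  have p: "(b+1)*b^n \<ge> 1" using assms by (simp add: Suc_le_eq)
  have b1: "b \<ge> 1" using assms by simp
  have "int (mm b n) = (int b + 1) * int b^n - 1" using p unfolding mm_def by (simp add: of_nat_diff algebra_simps)
  also have "\<dots> = int (b-1)*((int b+1)*int (rr b n) + 1) + 1"
  proof -
    have ib: "int (b-1) = int b - 1" using assms by simp
    have g: "(int b - 1) * int (rr b n) = int b^n - 1" using geom_int[of b n, OF b1] unfolding ib .
    have g0: "int b * int (rr b n) - int (rr b n) = int b^n - 1" using g by (simp add: left_diff_distrib)
    have g': "int b * int (rr b n) = int (rr b n) + int b^n - 1" using g0 by linarith
    have g3: "int b * (int b * int (rr b n)) = int b * (int (rr b n) + int b^n - 1)" using g' by simp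
    have g2: "int b * (int b * int (rr b n)) = int b * int (rr b n) + int b * int b^n - int b"
      using g3 by (simp add: right_diff_distrib distrib_left)
    show ?thesis unfolding ib using g' g2 by (simp add: algebra_simps)
  qed
  finally have X: "int (mm b n) = int (b-1)*((int b+1)*int (rr b n) + 1) + 1" .
  have Y: "int ((b-1)*((b+1)*rr b n + 1) + 1) = int (b-1)*((int b+1)*int (rr b n) + 1) + 1"
    by (simp only: of_nat_add of_nat_mult of_nat_1)
  have "int (mm b n) = int ((b-1)*((b+1)*rr b n + 1) + 1)" unfolding X Y ..
  then show ?thesis by (simp only: of_nat_eq_iff)
qed

lemma coprime_m: assumes "b \<ge> 2" shows "coprime (b-1) (mm b n)"
  using m_eq[OF assms, of n] cop by metis

lemma m_ge: assumes "b \<ge> 2" shows "mm b n \<ge> 2"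
proof -
  have "b^n \<ge> 1" using assms by simp
  then have "(b+1)*b^n \<ge> 3*1" using assms by (intro mult_mono) auto
  then show ?thesis unfolding mm_def by simp
qed

definition ff :: "nat \<Rightarrow> nat \<Rightarrow> nat" where "ff b j = (LEAST N. j \<le> hh b N)"

lemma ff_spec: assumes "b \<ge> 2" shows "j \<le> hh b (ff b j)"
proof -
  have "j \<le> hh b (b*j)" using hh_mult[OF assms, of j] by simp
  then show ?thesis unfolding ff_def by (rule LeastI)
qed

lemma ff_iff: assumes "b \<ge> 2" shows "(j \<le> hh b N) = (ff b j \<le> N)"
proof
  assume "j \<le> hh b N" then show "ff b j \<le> N" unfolding ff_def by (rule Least_le)
next
  assume "ff b j \<le> N" then show "j \<le> hh b N" using hh_mono[OF assms] ff_spec[OF assms, of j] le_trans by blast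
qed

lemma key: assumes "b \<ge> 2" "j < mm b n"
  shows "(mm b n * q + ((b-1)*j) mod mm b n \<in> T b n) = (ff b j + ((b-1)*j) div mm b n \<le> q)"
proof -
  define M where "M = mm b n"
  define c where "c = ((b-1)*j) mod M"
  define d where "d = ((b-1)*j) div M"
  have Mpos: "M > 0" using m_ge[OF assms(1), of n] unfolding M_def by simp
  have bj: "(b-1)*j = M*d + c" unfolding c_def d_def by simp
  have cM: "c < M" unfolding c_def using Mpos by simp
  show ?thesis unfolding M_def[symmetric] c_def[symmetric] d_def[symmetric]
  proof
    assume "ff b j + d \<le> q"
    then have j: "j \<le> hh b (q - d)" using ff_iff[OF assms(1)] by simp
    have "M*q + c = M*(q-d) + (b-1)*j"
    proof -
      define q' where "q' = q - d"
      have qq: "q = q' + d" unfolding q'_def using \<open>ff b j + d \<le> q\<close> by simp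
      show ?thesis unfolding bj q'_def[symmetric] unfolding qq by (simp add: distrib_left)
    qed
    then show "M*q + c \<in> T b n" using memb[OF assms(1)] j unfolding M_def by blast
  next
    assume "M*q + c \<in> T b n"
    then obtain N j' where Nj: "j' \<le> hh b N" "M*q + c = M*N + (b-1)*j'" using memb[OF assms(1)] unfolding M_def by blast
    have A: "(M*q + c) mod M = c" using cM by simp
    have B: "(M*N + (b-1)*j') mod M = ((b-1)*j') mod M" by simp
    have "c = (M*q + c) mod M" using A by (rule sym)
    also have "\<dots> = (M*N + (b-1)*j') mod M" using Nj(2) by (rule arg_cong)
    also have "\<dots> = ((b-1)*j') mod M" by (rule B)
    finally have "c = ((b-1)*j') mod M" .
    then have "((b-1)*j') mod M = ((b-1)*j) mod M" unfolding c_def by (rule sym)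
    then have "j' mod M = j mod M" using cancel coprime_m[OF assms(1), of n] unfolding M_def by blast
    then have jm: "j' mod M = j" using assms(2) unfolding M_def by simp
    define e where "e = j' div M"
    have j'e: "j' = M*e + j" using jm unfolding e_def by (metis mod_mult_div_eq add.commute mult.commute)
    then have "j \<le> hh b N" using Nj(1) by simp
    then have fN: "ff b j \<le> N" using ff_iff[OF assms(1)] by simp
    have "(b-1)*j' = M*((b-1)*e + d) + c" unfolding j'e using bj by (simp add: algebra_simps)
    then have "M*q + c = M*(N + (b-1)*e + d) + c" using Nj(2) by (simp add: algebra_simps)
    then have "q = N + (b-1)*e + d" using Mpos by simp
    then show "ff b j + d \<le> q" using fN by simp
  qed
qed

lemma mu_bij: assumes "b \<ge> 2"
  shows "(\<lambda>j. ((b-1)*j) mod mm b n) ` {..<mm b n} = {..<mm b n}"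
proof (rule endo_inj_surj)
  have Mpos: "mm b n > 0" using m_ge[OF assms, of n] by simp
  show "(\<lambda>j. ((b-1)*j) mod mm b n) ` {..<mm b n} \<subseteq> {..<mm b n}" using Mpos by auto
  show "inj_on (\<lambda>j. ((b-1)*j) mod mm b n) {..<mm b n}"
  proof (rule inj_onI)
    fix x y assume "x \<in> {..<mm b n}" "y \<in> {..<mm b n}" "((b-1)*x) mod mm b n = ((b-1)*y) mod mm b n"
    then have "x mod mm b n = y mod mm b n" using cancel[OF coprime_m[OF assms, of n]] by blast
    then show "x = y" using \<open>x \<in> {..<mm b n}\<close> \<open>y \<in> {..<mm b n}\<close> by simp
  qed
qed simp

definition WW :: "nat \<Rightarrow> nat \<Rightarrow> nat \<Rightarrow> nat" where
  "WW b n j = ff b j + ((b-1)*j) div mm b n"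

lemma gaps: assumes "b \<ge> 2"
  shows "UNIV - T b n = (\<lambda>(j,t). mm b n * t + ((b-1)*j) mod mm b n) ` (SIGMA j:{..<mm b n}. {..<WW b n j})"
    (is "_ = ?phi ` ?S")
proof
  show "?phi ` ?S \<subseteq> UNIV - T b n"
  proof
    fix x assume "x \<in> ?phi ` ?S"
    then obtain j t where jt: "j < mm b n" "t < WW b n j" "x = ?phi (j,t)" by auto
    then show "x \<in> UNIV - T b n" using key[OF assms jt(1), of t] unfolding WW_def by simp
  qed
next
  show "UNIV - T b n \<subseteq> ?phi ` ?S"
  proof
    fix x assume x: "x \<in> UNIV - T b n"
    have Mpos: "mm b n > 0" using m_ge[OF assms, of n] by simp
    have "x mod mm b n \<in> {..<mm b n}" using Mpos by simp
    then have "x mod mm b n \<in> (\<lambda>j. ((b-1)*j) mod mm b n) ` {..<mm b n}" using mu_bij[OF assms, of n] by simp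
    then obtain j where j0: "j \<in> {..<mm b n}" "x mod mm b n = ((b-1)*j) mod mm b n" by (rule imageE)
    then have j: "j < mm b n" "((b-1)*j) mod mm b n = x mod mm b n" by simp_all
    have xe: "x = mm b n * (x div mm b n) + ((b-1)*j) mod mm b n" using j(2) by simp
    then have "\<not> (ff b j + ((b-1)*j) div mm b n \<le> x div mm b n)"
      using key[OF assms j(1), of "x div mm b n"] x by simp
    then have "x div mm b n < WW b n j" unfolding WW_def by simp
    then show "x \<in> ?phi ` ?S" using j(1) xe by (intro image_eqI[of _ _ "(j, x div mm b n)"]) auto
  qed
qed

lemma phi_inj: assumes "b \<ge> 2"
  shows "inj_on (\<lambda>(j,t). mm b n * t + ((b-1)*j) mod mm b n) (SIGMA j:{..<mm b n}. {..<WW b n j})"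
proof (rule inj_onI, clarify)
  fix j t j' t'
  assume a: "j < mm b n" "j' < mm b n"
    "mm b n * t + ((b-1)*j) mod mm b n = mm b n * t' + ((b-1)*j') mod mm b n"
  have Mpos: "mm b n > 0" using m_ge[OF assms, of n] by simp
  have "((b-1)*j) mod mm b n = (mm b n * t + ((b-1)*j) mod mm b n) mod mm b n" by simp
  also have "\<dots> = (mm b n * t' + ((b-1)*j') mod mm b n) mod mm b n" using a(3) by (rule arg_cong)
  also have "\<dots> = ((b-1)*j') mod mm b n" by simp
  finally have c: "((b-1)*j) mod mm b n = ((b-1)*j') mod mm b n" .
  then have "j = j'" using cancel[OF coprime_m[OF assms, of n] c] a by simp
  moreover have "t = t'" using a(3) c Mpos by simp
  ultimately show "j = j' \<and> t = t'" by simp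
qed

lemma genus_sum: assumes "b \<ge> 2" shows "genus (T b n) = (\<Sum>j<mm b n. WW b n j)"
proof -
  have "genus (T b n) = card (SIGMA j:{..<mm b n}. {..<WW b n j})"
    unfolding genus_def gaps[OF assms] using card_image[OF phi_inj[OF assms]] by simp
  also have "\<dots> = (\<Sum>j<mm b n. WW b n j)" by (simp add: card_SigmaI)
  finally show ?thesis .
qed

lemma floor_pair: assumes "b \<ge> 2" "0 < j" "j < mm b n"
  shows "((b-1)*j) div mm b n + ((b-1)*(mm b n - j)) div mm b n = b - 2"
proof -
  define M where "M = mm b n"
  have jM: "0 < j" "j < M" using assms unfolding M_def by auto
  have cop: "coprime M (b-1)" using coprime_m[OF assms(1), of n] unfolding M_def by (simp add: coprime_commute)
  have "0 < ((b-1)*j) mod M"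
  proof (rule ccontr)
    assume "\<not> 0 < ((b-1)*j) mod M"
    then have "M dvd (b-1)*j" by (simp add: mod_eq_0_iff_dvd)
    then have "M dvd j" using cop coprime_dvd_mult_right_iff by blast
    then show False using jM by (auto dest: dvd_imp_le)
  qed
  moreover have "(b-1)*j \<le> (b-1)*M" using jM by simp
  ultimately have "((b-1)*j) div M + ((b-1)*M - (b-1)*j) div M = (b-1) - 1"
    using divsum[of "(b-1)*j" M "b-1"] by (simp add: mult.commute)
  moreover have "(b-1)*M - (b-1)*j = (b-1)*(M-j)" by (simp add: diff_mult_distrib2)
  ultimately show ?thesis unfolding M_def by (simp add: numeral_2_eq_2)
qed

lemma floor_sum: assumes "b \<ge> 2"
  shows "2 * (\<Sum>j<mm b n. ((b-1)*j) div mm b n) = (mm b n - 1)*(b-2)"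
proof -
  define M where "M = mm b n"
  define g where "g j = ((b-1)*j) div M" for j
  have M2: "M \<ge> 2" using m_ge[OF assms] unfolding M_def by simp
  have s0: "(\<Sum>j<M. g j) = (\<Sum>j\<in>{1..<M}. g j)"
  proof -
    have "{..<M} = insert 0 {1..<M}" using M2 by auto
    then show ?thesis unfolding g_def by simp
  qed
  have s1: "(\<Sum>j\<in>{1..<M}. g j) = (\<Sum>j\<in>{1..<M}. g (M - j))"
    by (rule sum.reindex_bij_witness[of _ "\<lambda>j. M - j" "\<lambda>j. M - j"]) auto
  have "2 * (\<Sum>j<M. g j) = (\<Sum>j\<in>{1..<M}. g j + g (M - j))"
    unfolding s0 sum.distrib s1[symmetric] by simp
  also have "\<dots> = (\<Sum>j\<in>{1..<M}. b - 2)"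
  proof (rule sum.cong)
    fix j assume "j \<in> {1..<M}"
    then show "g j + g (M - j) = b - 2" using floor_pair[OF assms, of j n] unfolding g_def M_def by simp
  qed simp
  also have "\<dots> = (M - 1)*(b-2)" by simp
  finally show ?thesis unfolding M_def g_def by simp
qed

definition KK :: "nat \<Rightarrow> nat \<Rightarrow> nat" where "KK b n = (b*b - 1)*b^n"

lemma hhK: assumes "b \<ge> 2" shows "hh b (KK b n) + 1 = mm b n"
proof (induction n)
  case 0
  have d: "(b*b-1) div b = b - 1"
  proof (rule div_nat_eqI)
    have sb: "Suc (b-1) = b" using assms by simp
    have bb: "b*b \<ge> 1" using assms by (simp add: Suc_le_eq)
    show "b*b - 1 < b * Suc (b-1)" unfolding sb using bb by simp
    have "b*(b-1) = b*b - b" by (simp add: diff_mult_distrib2)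
    then show "b*(b-1) \<le> b*b-1" using assms by simp
  qed
  have "hh b (b-1) = 0" using hh_rec[OF assms, of "b-1"] assms by (simp add: hh_zero)
  then have "hh b (b*b-1) = b - 1" using hh_rec[OF assms, of "b*b-1"] d by simp
  then show ?case using assms unfolding KK_def mm_def by simp
next
  case (Suc n)
  have "KK b (Suc n) = b * KK b n" unfolding KK_def by simp
  then have "hh b (KK b (Suc n)) = KK b n + hh b (KK b n)" using hh_mult[OF assms] by simp
  then have e: "hh b (KK b (Suc n)) + 1 = KK b n + mm b n" using Suc by simp
  have p: "(b+1)*b^n \<ge> 1" "(b+1)*b^Suc n \<ge> 1" "b*b \<ge> 1" using assms by (simp_all add: Suc_le_eq)
  have i1: "int (KK b n) = (int b * int b - 1) * int b^n" using p unfolding KK_def by (simp add: of_nat_diff)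
  have i2: "int (mm b n) = (int b + 1) * int b^n - 1" using p unfolding mm_def by (simp add: of_nat_diff algebra_simps)
  have i3: "int (mm b (Suc n)) = (int b + 1) * int b^Suc n - 1" using p unfolding mm_def by (simp add: of_nat_diff algebra_simps)
  have "int (KK b n + mm b n) = int (mm b (Suc n))"
    unfolding of_nat_add i1 i2 i3 by (simp add: algebra_simps)
  then show ?case using e by simp
qed

lemma ff_le_K: assumes "b \<ge> 2" "j < mm b n" shows "ff b j \<le> KK b n"
  using ff_iff[OF assms(1), of j "KK b n"] hhK[OF assms(1), of n] assms(2) by simp

lemma sum_ff: assumes "b \<ge> 2"
  shows "(\<Sum>j<mm b n. ff b j) = (\<Sum>N<KK b n. mm b n - Suc (hh b N))"
proof -
  define M where "M = mm b n"
  define K where "K = KK b n"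
  have "(\<Sum>j<M. ff b j) = (\<Sum>j<M. \<Sum>N<K. of_bool (hh b N < j) :: nat)"
  proof (rule sum.cong)
    fix j assume "j \<in> {..<M}"
    then have fK: "ff b j \<le> K" using ff_le_K[OF assms] unfolding M_def K_def by simp
    have "{..<K} \<inter> {N. hh b N < j} = {..<ff b j}"
      using ff_iff[OF assms] fK by (auto simp: not_le[symmetric])
    then show "ff b j = (\<Sum>N<K. of_bool (hh b N < j) :: nat)" by simp
  qed simp
  also have "\<dots> = (\<Sum>N<K. \<Sum>j<M. of_bool (hh b N < j) :: nat)" by (rule sum.swap)
  also have "\<dots> = (\<Sum>N<K. M - Suc (hh b N))"
  proof (rule sum.cong)
    fix N assume "N \<in> {..<K}"
    have "{..<M} \<inter> {j. hh b N < j} = {Suc (hh b N)..<M}" by auto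
    then show "(\<Sum>j<M. of_bool (hh b N < j) :: nat) = M - Suc (hh b N)" by simp
  qed simp
  finally show ?thesis unfolding M_def K_def .
qed

definition HH :: "nat \<Rightarrow> nat \<Rightarrow> nat" where "HH b Q = (\<Sum>N<Q. hh b N)"

lemma gauss2: fixes Q :: nat shows "2 * (\<Sum>q<Q. q) = Q * (Q - 1)"
proof (induction Q)
  case 0 then show ?case by simp
next
  case (Suc Q) then show ?case by (cases Q) (simp_all add: algebra_simps)
qed

lemma HH_mult: assumes "b \<ge> 2" shows "2 * HH b (b*Q) = b * (Q*(Q-1)) + 2 * b * HH b Q"
proof -
  have "HH b (Q*b) = (\<Sum>q<Q. sum (hh b) {q*b..<q*b+b})" unfolding HH_def by (rule sum.nat_group[symmetric])
  also have "\<dots> = (\<Sum>q<Q. b * (q + hh b q))"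
  proof (rule sum.cong)
    fix q assume "q \<in> {..<Q}"
    have "sum (hh b) {q*b..<q*b+b} = sum (\<lambda>_. q + hh b q) {q*b..<q*b+b}"
    proof (rule sum.cong)
      fix N assume N: "N \<in> {q*b..<q*b+b}"
      then have "N div b = q" using assms by (auto intro: div_nat_eqI simp: mult.commute)
      then show "hh b N = q + hh b q" using hh_rec[OF assms, of N] by simp
    qed simp
    then show "sum (hh b) {q*b..<q*b+b} = b * (q + hh b q)" by simp
  qed simp
  also have "\<dots> = b * (\<Sum>q<Q. q) + b * HH b Q" unfolding HH_def by (simp add: sum_distrib_left sum.distrib algebra_simps)
  finally have "HH b (b*Q) = b * (\<Sum>q<Q. q) + b * HH b Q" by (simp add: mult.commute)
  then have "2 * HH b (b*Q) = b * (2 * (\<Sum>q<Q. q)) + 2 * b * HH b Q" by (simp add: algebra_simps)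
  then show ?thesis unfolding gauss2 .
qed

lemma hh_small: assumes "b \<ge> 2" "N < b" shows "hh b N = 0"
  using hh_rec[OF assms(1), of N] assms by (simp add: hh_zero)

lemma HH0: assumes "b \<ge> 2" shows "2 * HH b (b*b - 1) + 2*(b-1) = b*(b*(b-1))"
proof -
  have h1: "hh b (b*b-1) = b - 1" using hhK[OF assms, of 0] unfolding KK_def mm_def by simp
  have bb: "b*b = Suc (b*b-1)" using assms by (simp add: Suc_le_eq)
  have "HH b (b*b) = HH b (b*b-1) + hh b (b*b-1)" unfolding HH_def by (subst bb) simp
  moreover have "HH b b = 0" unfolding HH_def using hh_small[OF assms] by simp
  ultimately show ?thesis using HH_mult[OF assms, of b] h1 by simp
qed

lemma real_QQ: "real Q * real (Q-1) = real Q * (real Q - 1)"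
  by (cases Q) (simp_all add: algebra_simps)

lemma KK_real: assumes "b \<ge> 2" shows "real (KK b n) = (real b ^ 2 - 1) * real b ^ n"
proof -
  have "b*b \<ge> 1" using assms by (simp add: Suc_le_eq)
  then show ?thesis unfolding KK_def by (simp add: of_nat_diff power2_eq_square)
qed

lemma HH_closed: assumes "b \<ge> 2"
  shows "2 * real (HH b (KK b n)) = real b ^ n * (real b - 1) * (real b ^ 2 - 2)
     + (real b + 1) * (real b ^ 2 - 1) * real b ^ n * (real b ^ n - 1) - (real b ^ 2 - 1) * real n * real b ^ n"
proof (induction n)
  case 0
  have "real (2 * HH b (b*b - 1) + 2*(b-1)) = real (b*(b*(b-1)))" using HH0[OF assms] by metis
  then have "2 * real (HH b (b*b - 1)) + 2*(real b - 1) = real b * (real b * (real b - 1))"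
    using assms by (simp add: of_nat_diff)
  then show ?case unfolding KK_def by (simp add: algebra_simps power2_eq_square)
next
  case (Suc n)
  have "KK b (Suc n) = b * KK b n" unfolding KK_def by simp
  then have "real (2 * HH b (KK b (Suc n))) = real (b * (KK b n * (KK b n - 1)) + 2 * b * HH b (KK b n))"
    using HH_mult[OF assms, of "KK b n"] by metis
  then have e: "2 * real (HH b (KK b (Suc n))) = real b * (real (KK b n) * (real (KK b n) - 1)) + real b * (2 * real (HH b (KK b n)))"
    by (simp only: of_nat_add of_nat_mult real_QQ of_nat_numeral)
  show ?case unfolding e Suc KK_real[OF assms] by (simp add: power2_eq_square) (simp add: algebra_simps)
qed

theorem mainTheorem2:
  fixes b n :: nat
  assumes "b \<ge> 2"
  shows "real (genus (T b n)) =
    ((real b ^ 3 + real b ^ 2 - real b - 1) * real b ^ (2 * n)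
     + ((real n - 1) * (real b ^ 2 - 1) - 2) * real b ^ n - 2 * real b + 4) / 2"
proof -
  define M where "M = mm b n"
  define K where "K = KK b n"
  define B where "B = real b ^ n"
  have M2: "M \<ge> 2" using m_ge[OF assms] unfolding M_def by simp
  have Mr: "real M = (real b + 1) * B - 1"
  proof -
    have "(b+1)*b^n \<ge> 1" using assms by (simp add: Suc_le_eq)
    then show ?thesis unfolding M_def mm_def B_def by (simp add: of_nat_diff algebra_simps)
  qed
  have Kr: "real K = (real b ^ 2 - 1) * B" unfolding K_def B_def by (rule KK_real[OF assms])
  have g1: "genus (T b n) = (\<Sum>j<M. ff b j) + (\<Sum>j<M. ((b-1)*j) div M)"
    unfolding genus_sum[OF assms] WW_def M_def by (simp add: sum.distrib)
  have hK: "\<And>N. N < K \<Longrightarrow> hh b N \<le> M - 1"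
    using hh_mono[OF assms] hhK[OF assms, of n] unfolding M_def K_def
    by (metis add_diff_cancel_right' less_imp_le)
  have sf: "(\<Sum>j<M. ff b j) = (\<Sum>N<K. M - Suc (hh b N))" unfolding M_def K_def by (rule sum_ff[OF assms])
  have "real (\<Sum>j<M. ff b j) = real (\<Sum>N<K. M - Suc (hh b N))" using sf by (rule arg_cong)
  also have "\<dots> = (\<Sum>N<K. real (M - Suc (hh b N)))" by (rule of_nat_sum)
  also have "\<dots> = (\<Sum>N<K. real M - 1 - real (hh b N))"
  proof (rule sum.cong)
    fix N assume "N \<in> {..<K}"
    then have "Suc (hh b N) \<le> M" using hK M2 by fastforce
    then show "real (M - Suc (hh b N)) = real M - 1 - real (hh b N)" by (simp add: of_nat_diff)
  qed simp
  also have "\<dots> = real K * (real M - 1) - real (HH b K)"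
    unfolding HH_def by (simp add: sum_subtractf of_nat_sum)
  finally have f2: "real (\<Sum>j<M. ff b j) = real K * (real M - 1) - real (HH b K)" .
  have fl: "2 * real (\<Sum>j<M. ((b-1)*j) div M) = (real M - 1) * (real b - 2)"
  proof -
    have "real (2 * (\<Sum>j<M. ((b-1)*j) div M)) = real ((M - 1)*(b-2))" using floor_sum[OF assms, of n] unfolding M_def by simp
    then show ?thesis using M2 assms by (simp add: of_nat_diff)
  qed
  have H: "2 * real (HH b K) = B * (real b - 1) * (real b ^ 2 - 2)
     + (real b + 1) * (real b ^ 2 - 1) * B * (B - 1) - (real b ^ 2 - 1) * real n * B"
    unfolding K_def B_def by (rule HH_closed[OF assms])
  have "2 * real (genus (T b n)) = 2 * real K * (real M - 1) - 2 * real (HH b K) + (real M - 1) * (real b - 2)"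
    unfolding g1 of_nat_add using f2 fl by (simp add: algebra_simps)
  also have "\<dots> = (real b ^ 3 + real b ^ 2 - real b - 1) * B^2
     + ((real n - 1) * (real b ^ 2 - 1) - 2) * B - 2 * real b + 4"
    unfolding H Kr Mr by (simp add: algebra_simps power2_eq_square power3_eq_cube)
  finally show ?thesis unfolding B_def by (simp add: power_mult power2_eq_square mult.commute[of 2 n])
qed

end
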